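(* In the SDR $(i_\hbar,p_\hbar,K_\hbar)$ obtained from $(i,p,K)$ by the homological perturbation lemma with perturbation $\delta=-\mathrm{i}\hbar\Delta$, the chain homotopy is given as follows: for $O\in S\mathcal F^*$ homogeneous of degree $n\ge1$ in the $\mathcal F''$-coordinates, $$K_\hbar O=\sum_{j=0}^{\lfloor (n-1)/2\rfloor}\frac{(\mathrm{i}\hbar)^j}{n(n-2)\cdots(n-2j)}\,\hat\kappa\,\eta^jO,$$ and $K_\hbar O=0$ if $O$ does not depend on $x''$. Equivalently, $K_\hbar=\hat\kappa\nu(1-\mathrm{i}\hbar\,\eta\nu)^{-1}=\sum_{j\ge0}\hat\kappa\nu(\mathrm{i}\hbar\,\eta\nu)^j$.
   Context: Standing setting. Let $\mathcal F$ be a finite-dimensional $\mathbb Z$-graded real vector space with a degree $+1$ differential $d$ and a nondegenerate constant pairing $\omega$ of degree $-1$ compatible with $d$. Assume a splitting $\mathcal F=\mathcal F'\oplus\mathcal F''$ into $d$-invariant $\omega$-orthogonal subspaces with $\omega=\omega'+\omega''$ and $(\mathcal F'',d'')$ acyclic. Let $\iota,\pi$ be the inclusion of and projection to $\mathcal F'$, and fix a degree $-1$ map $\kappa$ with $d\kappa+\kappa d=\mathrm{id}-\iota\pi$, $\kappa^2=0$, $\kappa\iota=0$, $\pi\kappa=0$, $\omega(x,\kappa y)=\pm\omega(\kappa x,y)$. Write $x=x'+x''$. BV Laplacian on $S\mathcal F^*$: $\Delta=\frac12(\omega^{-1})^{ij}\partial_{x^i}\partial_{x^j}$. $S_0(x)=\frac12\omega(x,dx)$,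 $Q_0=\{S_0,-\}$ (Poisson bracket induced by $\omega$), $Q_0'$ similarly on $\mathcal F'$. $i=\pi^*$, $p=\iota^*$. $\hat\kappa$ is the derivation of $S\mathcal F^*$ extending $\kappa^\vee$. With $S\mathcal F^*=\bigoplus_{N\ge0}S\mathcal F'^*\otimes S^N\mathcal F''^*$, $\nu$ multiplies the $N$-th summand by $1/N$ ($N\ge1$) and is $0$ for $N=0$. $K=\nu\hat\kappa$; $(i,p,K)$ is an SDR of $(S\mathcal F^*,Q_0)$ onto $(S\mathcal F'^*,Q_0')$. $h=\omega''^{-1}\kappa^\vee\in S^2\mathcal F''$ and $\eta=h^{ab}\partial_{x''^a}\partial_{x''^b}$. Homological perturbation lemma: for SDR data $(i,p,K)$ of $(V,d)$ onto $(V',d')$ and a perturbation $\delta$ with $(d+\delta)^2=0$, the perturbed chain homotopy is $\tilde K=\sum_{k\ge0}K(-\delta K)^k$ (with $\tilde i,\tilde p,\tilde d'$ given by the analogous standard formulas). *)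

theory Defs
  imports "HOL-Analysis.Analysis"
begin

text \<open>
The finite-dimensional graded space F is presented with a homogeneous
basis e_i indexed by a finite linearly ordered type 'i, adapted to the splitting
F = F' (+) F'' (F'' is spanned by e_i with i in I2).  deg i is the degree of e_i.
Vectors of F are real^'i, linear maps are matrices real^'i^'i acting by *v.
The coordinate function x^i (dual basis) has degree - deg i, parity = parity of deg i.

The graded-symmetric algebra S F^* (complex coefficients, since i*hbar appears) is
represented by coefficient functions on exponent vectors m :: 'i => nat, where
m stands for the ordered monomial  x^m = prod_{i ascending} (x^i)^(m i),
and odd coordinates occur with exponent at most 1.
\<close>

definition adm :: "('i \<Rightarrow> int) \<Rightarrow> ('i \<Rightarrow> nat) \<Rightarrow> bool" where
  "adm deg m \<longleftrightarrow> (\<forall>i. odd (deg i) \<longrightarrow> m i \<le> 1)"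

definition spoly :: "('i \<Rightarrow> int) \<Rightarrow> (('i \<Rightarrow> nat) \<Rightarrow> complex) \<Rightarrow> bool" where
  "spoly deg P \<longleftrightarrow> finite {m. P m \<noteq> 0} \<and> (\<forall>m. P m \<noteq> 0 \<longrightarrow> adm deg m)"

text \<open>Koszul sign for moving the generator x^a past the generators x^j, j < a, of x^m.\<close>
definition ksign :: "('i::{finite,linorder} \<Rightarrow> int) \<Rightarrow> 'i \<Rightarrow> ('i \<Rightarrow> nat) \<Rightarrow> complex" where
  "ksign deg a m =
     (if odd (deg a) then (-1) ^ (\<Sum>j\<in>{j. j < a \<and> odd (deg j)}. m j) else 1)"

text \<open>Left partial derivative with respect to x^a.\<close>
definition sderiv :: "('i::{finite,linorder} \<Rightarrow> int) \<Rightarrow> 'i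
     \<Rightarrow> (('i \<Rightarrow> nat) \<Rightarrow> complex) \<Rightarrow> (('i \<Rightarrow> nat) \<Rightarrow> complex)" where
  "sderiv deg a P = (\<lambda>m. if adm deg (m(a := m a + 1))
       then of_nat (m a + 1) * ksign deg a m * P (m(a := m a + 1)) else 0)"

text \<open>Left multiplication by the generator x^b.\<close>
definition xmul :: "('i::{finite,linorder} \<Rightarrow> int) \<Rightarrow> 'i
     \<Rightarrow> (('i \<Rightarrow> nat) \<Rightarrow> complex) \<Rightarrow> (('i \<Rightarrow> nat) \<Rightarrow> complex)" where
  "xmul deg b P = (\<lambda>m. if adm deg m \<and> 1 \<le> m b
       then ksign deg b (m(b := m b - 1)) * P (m(b := m b - 1)) else 0)"

text \<open>Scalar pairing omega(x,y) = x . (W *v y); its inverse has entries matrix_inv W.\<close>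
definition omega :: "real^('i::{finite,linorder})^('i::{finite,linorder}) \<Rightarrow> real^('i::{finite,linorder}) \<Rightarrow> real^('i::{finite,linorder}) \<Rightarrow> real" where
  "omega W x y = x \<bullet> (W *v y)"

definition ebasis :: "'i::{finite,linorder} \<Rightarrow> real^('i::{finite,linorder})" where
  "ebasis i = axis i 1"

definition bvlap :: "('i::{finite,linorder} \<Rightarrow> int) \<Rightarrow> real^('i::{finite,linorder})^('i::{finite,linorder})
     \<Rightarrow> (('i \<Rightarrow> nat) \<Rightarrow> complex) \<Rightarrow> (('i \<Rightarrow> nat) \<Rightarrow> complex)" where
  "bvlap deg W P = (\<lambda>m. (1/2) * (\<Sum>i\<in>UNIV. \<Sum>j\<in>UNIV.
       of_real (matrix_inv W $ i $ j) * sderiv deg i (sderiv deg j P) m))"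

text \<open>kappa-hat: the derivation extending kappa^vee, where kappa^vee x^a = sum_b kappa_ab x^b
  (kappa acts by Kk *v); explicitly kappa-hat = sum_a (kappa^vee x^a) d_a.\<close>
definition kappa_hat :: "('i::{finite,linorder} \<Rightarrow> int) \<Rightarrow> real^('i::{finite,linorder})^('i::{finite,linorder})
     \<Rightarrow> (('i \<Rightarrow> nat) \<Rightarrow> complex) \<Rightarrow> (('i \<Rightarrow> nat) \<Rightarrow> complex)" where
  "kappa_hat deg Kk P = (\<lambda>m. \<Sum>a\<in>UNIV. \<Sum>b\<in>UNIV.
       of_real (Kk $ a $ b) * xmul deg b (sderiv deg a P) m)"

definition Ndeg :: "'i set \<Rightarrow> ('i \<Rightarrow> nat) \<Rightarrow> nat" where
  "Ndeg I2 m = (\<Sum>i\<in>I2. m i)"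

definition nu :: "'i set \<Rightarrow> (('i \<Rightarrow> nat) \<Rightarrow> complex) \<Rightarrow> (('i \<Rightarrow> nat) \<Rightarrow> complex)" where
  "nu I2 P = (\<lambda>m. if Ndeg I2 m = 0 then 0 else P m / of_nat (Ndeg I2 m))"

definition homN :: "'i set \<Rightarrow> nat \<Rightarrow> (('i \<Rightarrow> nat) \<Rightarrow> complex) \<Rightarrow> bool" where
  "homN I2 n P \<longleftrightarrow> (\<forall>m. P m \<noteq> 0 \<longrightarrow> Ndeg I2 m = n)"

text \<open>h = omega''^-1 kappa^vee in S^2 F'': as a map F''^* -> F'', x^b |-> sum_a h^{ab} e_a.
  (By omega-orthogonality of the splitting, omega''^-1 is the I2-block of matrix_inv W.)\<close>
definition hmat :: "real^('i::{finite,linorder})^('i::{finite,linorder}) \<Rightarrow> real^('i::{finite,linorder})^('i::{finite,linorder}) \<Rightarrow> 'i set \<Rightarrow> 'i \<Rightarrow> 'i \<Rightarrow> real" where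
  "hmat W Kk I2 a b = (\<Sum>j\<in>I2. matrix_inv W $ a $ j * Kk $ b $ j)"

definition eta :: "('i::{finite,linorder} \<Rightarrow> int) \<Rightarrow> real^('i::{finite,linorder})^('i::{finite,linorder}) \<Rightarrow> real^('i::{finite,linorder})^('i::{finite,linorder}) \<Rightarrow> 'i set
     \<Rightarrow> (('i \<Rightarrow> nat) \<Rightarrow> complex) \<Rightarrow> (('i \<Rightarrow> nat) \<Rightarrow> complex)" where
  "eta deg W Kk I2 P = (\<lambda>m. \<Sum>a\<in>I2. \<Sum>b\<in>I2.
       of_real (hmat W Kk I2 a b) * sderiv deg a (sderiv deg b P) m)"

definition pert_homotopy :: "(('m \<Rightarrow> complex) \<Rightarrow> ('m \<Rightarrow> complex))
     \<Rightarrow> (('m \<Rightarrow> complex) \<Rightarrow> ('m \<Rightarrow> complex)) \<Rightarrow> ('m \<Rightarrow> complex) \<Rightarrow> ('m \<Rightarrow> complex)" where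
  "pert_homotopy K delta P =
     (\<lambda>m. \<Sum>k. K (((\<lambda>X. (\<lambda>m'. - delta (K X) m')) ^^ k) P) m)"

definition K_hbar :: "('i::{finite,linorder} \<Rightarrow> int) \<Rightarrow> real^('i::{finite,linorder})^('i::{finite,linorder}) \<Rightarrow> real^('i::{finite,linorder})^('i::{finite,linorder}) \<Rightarrow> 'i set
     \<Rightarrow> real \<Rightarrow> (('i \<Rightarrow> nat) \<Rightarrow> complex) \<Rightarrow> (('i \<Rightarrow> nat) \<Rightarrow> complex)" where
  "K_hbar deg W Kk I2 hbar =
     pert_homotopy (\<lambda>X. nu I2 (kappa_hat deg Kk X))
                   (\<lambda>X m. - (\<i> * of_real hbar) * bvlap deg W X m)"

end

theory Submission
  imports Defs
begin


type_synonym 'j cpoly = "('j \<Rightarrow> nat) \<Rightarrow> complex"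

definition sg :: "('i \<Rightarrow> int) \<Rightarrow> 'i \<Rightarrow> 'i \<Rightarrow> complex" where
  "sg deg a b = (if odd (deg a) \<and> odd (deg b) then -1 else 1)"

definition fsh :: "('i::linorder \<Rightarrow> int) \<Rightarrow> 'i \<Rightarrow> 'i \<Rightarrow> complex" where
  "fsh deg b a = (if b < a \<and> odd (deg b) \<and> odd (deg a) then -1 else 1)"

lemma sum_upd_inc:
  assumes "finite S"
  shows "(\<Sum>j\<in>S. (m(b := m b + 1)) j) = (\<Sum>j\<in>S. m j) + (if b \<in> S then 1 else 0)"
proof -
  have "(\<Sum>j\<in>S. (m(b := m b + 1)) j) = (\<Sum>j\<in>S. m j + (if j = b then 1 else 0))"
    by (rule sum.cong) auto
  also have "\<dots> = (\<Sum>j\<in>S. m j) + (if b \<in> S then 1 else 0)"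
    using assms by (simp add: sum.distrib)
  finally show ?thesis .
qed

lemma ksign_inc:
  "ksign deg a (m(b := m b + 1)) = fsh deg b a * ksign deg a (m::'i::{finite,linorder} \<Rightarrow> nat)"
proof -
  have "(\<Sum>j\<in>{j. j < a \<and> odd (deg j)}. (m(b := m b + 1)) j) = (\<Sum>j\<in>{j. j < a \<and> odd (deg j)}. m j) + (if b \<in> {j. j < a \<and> odd (deg j)} then 1 else 0)"
    by (rule sum_upd_inc) simp
  thus ?thesis unfolding ksign_def fsh_def by (auto simp del: fun_upd_apply)
qed

lemma ksign_same: "ksign deg a (m(a := k)) = ksign deg a m"
  unfolding ksign_def by (auto intro!: sum.cong arg_cong[where f="\<lambda>x. (-1)^x"])

lemma ksign_dec:
  assumes "1 \<le> m b"
  shows "ksign deg a m = fsh deg b a * ksign deg a (m(b := m b - 1))"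
proof -
  have "m = (m(b := m b - 1))(b := (m(b := m b - 1)) b + 1)" using assms by auto
  hence "ksign deg a m = ksign deg a ((m(b := m b - 1))(b := (m(b := m b - 1)) b + 1))" by simp
  also have "\<dots> = fsh deg b a * ksign deg a (m(b := m b - 1))" by (rule ksign_inc)
  finally show ?thesis .
qed

lemma adm_mono: "adm deg m' \<Longrightarrow> (\<And>i. m i \<le> m' i) \<Longrightarrow> adm deg m"
  unfolding adm_def using le_trans by blast

lemma fsh_swap: "a \<noteq> b \<Longrightarrow> fsh deg a b = sg deg a b * fsh deg b a"
  unfolding fsh_def sg_def by auto

lemma ksign_sq: "ksign deg a m * ksign deg a m = 1"
  unfolding ksign_def by (auto simp: power_mult_distrib[symmetric])

lemma sderiv_comm:
  "sderiv deg a (sderiv deg b P) m = sg deg a b * sderiv deg b (sderiv deg a P) m"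
proof (cases "a = b")
  case True
  show ?thesis
  proof (cases "odd (deg a)")
    case False thus ?thesis using True by (simp add: sg_def)
  next
    case odd: True
    have "sderiv deg a (sderiv deg a P) m = 0"
      using odd unfolding sderiv_def adm_def by auto
    thus ?thesis using True by simp
  qed
next
  case ab: False
  define mab where "mab = m(a := m a + 1, b := m b + 1)"
  have e1: "(m(a := m a + 1))(b := (m(a := m a + 1)) b + 1) = mab"
    using ab by (simp add: mab_def)
  have e2: "(m(b := m b + 1))(a := (m(b := m b + 1)) a + 1) = mab"
    using ab by (simp add: mab_def fun_upd_twist)
  show ?thesis
  proof (cases "adm deg mab")
    case False
    thus ?thesis unfolding sderiv_def using e1 e2 by (simp del: fun_upd_apply)
  next
    case True
    have a1: "adm deg (m(a := m a + 1))" by (rule adm_mono[OF True]) (auto simp: mab_def)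
    have a2: "adm deg (m(b := m b + 1))" by (rule adm_mono[OF True]) (auto simp: mab_def)
    have "sderiv deg a (sderiv deg b P) m
        = of_nat (m a + 1) * ksign deg a m * (of_nat (m b + 1) * ksign deg b (m(a := m a + 1)) * P mab)"
      unfolding sderiv_def using a1 True e1 ab by (simp del: fun_upd_apply) (simp add: e1)
    also have "\<dots> = of_nat (m a + 1) * ksign deg a m * (of_nat (m b + 1) * (fsh deg a b * ksign deg b m) * P mab)"
      by (simp only: ksign_inc)
    finally have L: "sderiv deg a (sderiv deg b P) m = \<dots>" .
    have "sderiv deg b (sderiv deg a P) m
        = of_nat (m b + 1) * ksign deg b m * (of_nat (m a + 1) * ksign deg a (m(b := m b + 1)) * P mab)"
      unfolding sderiv_def using a2 True e2 ab by (simp del: fun_upd_apply) (simp add: e2)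
    also have "\<dots> = of_nat (m b + 1) * ksign deg b m * (of_nat (m a + 1) * (fsh deg b a * ksign deg a m) * P mab)"
      by (simp only: ksign_inc)
    finally have R: "sderiv deg b (sderiv deg a P) m = \<dots>" .
    show ?thesis unfolding L R using fsh_swap[OF ab, of deg] by (simp add: algebra_simps)
  qed
qed

lemma fsh_sq: "fsh deg b a * fsh deg b a = 1"
  unfolding fsh_def by auto

lemma ksign_dec':
  assumes "1 \<le> m b"
  shows "ksign deg a (m(b := m b - 1)) = fsh deg b a * ksign deg a m"
  using ksign_dec[where m=m and b=b and deg=deg and a=a, OF assms] fsh_sq[of deg b a]
  by (metis mult.assoc mult_1)

lemma xmul_comm:
  "xmul deg a (xmul deg b P) m = sg deg a b * xmul deg b (xmul deg a P) m"
proof (cases "a = b")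
  case True
  show ?thesis
  proof (cases "odd (deg a)")
    case False thus ?thesis using True by (simp add: sg_def)
  next
    case odd: True
    have "xmul deg a (xmul deg a P) m = 0"
      using odd unfolding xmul_def adm_def by auto
    thus ?thesis using True by simp
  qed
next
  case ab: False
  define mab where "mab = m(a := m a - 1, b := m b - 1)"
  have e1: "(m(a := m a - 1))(b := (m(a := m a - 1)) b - 1) = mab"
    using ab by (simp add: mab_def)
  have e2: "(m(b := m b - 1))(a := (m(b := m b - 1)) a - 1) = mab"
    using ab by (simp add: mab_def fun_upd_twist)
  show ?thesis
  proof (cases "adm deg m \<and> 1 \<le> m a \<and> 1 \<le> m b")
    case False
    hence "\<not> adm deg m \<or> m a = 0 \<or> m b = 0" by auto
    moreover have "adm deg m \<Longrightarrow> adm deg (m(a := m a - 1))" by (erule adm_mono) auto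
    moreover have "adm deg m \<Longrightarrow> adm deg (m(b := m b - 1))" by (erule adm_mono) auto
    ultimately show ?thesis unfolding xmul_def using ab by auto
  next
    case True
    have a1: "adm deg (m(a := m a - 1))" by (rule adm_mono[of _ m]) (use True in auto)
    have a2: "adm deg (m(b := m b - 1))" by (rule adm_mono[of _ m]) (use True in auto)
    have "xmul deg a (xmul deg b P) m
        = ksign deg a m * (ksign deg b (m(a := m a - 1)) * P mab)"
    proof -
      have k: "ksign deg b mab = ksign deg b (m(a := m a - 1))" unfolding e1[symmetric] by (rule ksign_same)
      show ?thesis
      unfolding xmul_def using a1 True e1 ab by (simp add: ksign_same del: fun_upd_apply) (simp add: e1 k ksign_same)
    qed
    also have "\<dots> = ksign deg a m * ((fsh deg a b * ksign deg b m) * P mab)"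
      using True by (simp only: ksign_dec')
    finally have L: "xmul deg a (xmul deg b P) m = \<dots>" .
    have "xmul deg b (xmul deg a P) m
        = ksign deg b m * (ksign deg a (m(b := m b - 1)) * P mab)"
    proof -
      have k: "ksign deg a mab = ksign deg a (m(b := m b - 1))" unfolding e2[symmetric] by (rule ksign_same)
      show ?thesis
      unfolding xmul_def using a2 True e2 ab by (simp add: ksign_same del: fun_upd_apply) (simp add: e2 k ksign_same)
    qed
    also have "\<dots> = ksign deg b m * ((fsh deg b a * ksign deg a m) * P mab)"
      using True by (simp only: ksign_dec')
    finally have R: "xmul deg b (xmul deg a P) m = \<dots>" .
    show ?thesis unfolding L R using fsh_swap[OF ab, of deg] by (simp add: algebra_simps)
  qed
qed

definition asupp :: "('i \<Rightarrow> int) \<Rightarrow> 'i cpoly \<Rightarrow> bool" where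
  "asupp deg P \<longleftrightarrow> (\<forall>m. P m \<noteq> 0 \<longrightarrow> adm deg m)"

lemma asupp_sderiv: "asupp deg (sderiv deg a P)"
  unfolding asupp_def sderiv_def by (auto elim: adm_mono split: if_splits)

lemma asupp_xmul: "asupp deg (xmul deg a P)"
  unfolding asupp_def xmul_def by (auto split: if_splits)

lemma sderiv_xmul:
  assumes "asupp deg P"
  shows "sderiv deg a (xmul deg b P) m = (if a = b then P m else 0) + sg deg a b * xmul deg b (sderiv deg a P) m"
proof (cases "a = b")
  case True
  have L: "sderiv deg a (xmul deg a P) m = (if adm deg (m(a := m a + 1)) then of_nat (m a + 1) * P m else 0)"
    unfolding sderiv_def xmul_def by (simp add: ksign_same ksign_sq mult.assoc[symmetric])
  have R: "xmul deg a (sderiv deg a P) m = (if adm deg m \<and> 1 \<le> m a then of_nat (m a) * P m else 0)"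
  proof (cases "adm deg m \<and> 1 \<le> m a")
    case c: True
    have e: "(m(a := m a - 1))(a := (m(a := m a - 1)) a + 1) = m" using c by auto
    have "xmul deg a (sderiv deg a P) m = ksign deg a m * (of_nat (m a - 1 + 1) * ksign deg a m * P m)"
      unfolding xmul_def sderiv_def using c e by (simp add: ksign_same del: fun_upd_apply) (simp add: ksign_same)
    also have "\<dots> = of_nat (m a) * P m" using c
      by (simp add: ksign_sq mult.commute mult.left_commute)
    finally show ?thesis using c by simp
  next
    case False thus ?thesis unfolding xmul_def by auto
  qed
  show ?thesis
  proof (cases "adm deg m")
    case False
    hence "P m = 0" using assms unfolding asupp_def by auto
    moreover have "\<not> adm deg (m(a := m a + 1))"
    proof
      assume h: "adm deg (m(a := m a + 1))"
      have "adm deg m" by (rule adm_mono[OF h]) simp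
      thus False using False by simp
    qed
    ultimately show ?thesis using True L R by simp
  next
    case am: True
    show ?thesis
    proof (cases "odd (deg a)")
      case False
      hence "adm deg (m(a := m a + 1))" using am unfolding adm_def by auto
      hence L': "sderiv deg a (xmul deg a P) m = of_nat (m a + 1) * P m" using L by simp
      have sg1: "sg deg a a = 1" using False by (simp add: sg_def)
      show ?thesis
      proof (cases "m a = 0")
        case True
        thus ?thesis using \<open>a = b\<close> L' R sg1 by simp
      next
        case False
        hence "xmul deg a (sderiv deg a P) m = of_nat (m a) * P m" using R am by simp
        thus ?thesis using \<open>a = b\<close> L' sg1 by (simp add: distrib_right)
      qed
    next
      case od: True
      have "m a \<le> 1" using am od unfolding adm_def by auto
      moreover have "adm deg (m(a := m a + 1)) \<longleftrightarrow> m a = 0" using am od unfolding adm_def by auto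
      moreover have sg1: "sg deg a a = -1" using od by (simp add: sg_def)
      ultimately show ?thesis
      proof (cases "m a = 0")
        case z: True
        hence "sderiv deg a (xmul deg a P) m = P m" using L \<open>adm deg (m(a := m a + 1)) \<longleftrightarrow> m a = 0\<close> by simp
        moreover have "xmul deg a (sderiv deg a P) m = 0" using R z by simp
        ultimately show ?thesis using \<open>a = b\<close> by simp
      next
        case nz: False
        hence o: "m a = 1" using \<open>m a \<le> 1\<close> by simp
        hence "sderiv deg a (xmul deg a P) m = 0" using L \<open>adm deg (m(a := m a + 1)) \<longleftrightarrow> m a = 0\<close> by simp
        moreover have "xmul deg a (sderiv deg a P) m = P m" using R o am by simp
        ultimately show ?thesis using \<open>a = b\<close> sg1 by simp
      qed
    qed
  qed
next
  case ab: False
  define mab where "mab = m(a := m a + 1, b := m b - 1)"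
  have e1: "(m(a := m a + 1))(b := (m(a := m a + 1)) b - 1) = mab"
    using ab by (simp add: mab_def)
  have e2: "(m(b := m b - 1))(a := (m(b := m b - 1)) a + 1) = mab"
    using ab by (simp add: mab_def fun_upd_twist)
  have cond: "(adm deg (m(a := m a + 1)) \<and> 1 \<le> m b) \<longleftrightarrow>
       (adm deg m \<and> 1 \<le> m b \<and> adm deg mab)"
  proof -
    have mab_a: "mab a = m a + 1" using ab by (simp add: mab_def)
    have i1: "adm deg (m(a := m a + 1)) \<Longrightarrow> adm deg mab" by (erule adm_mono) (simp add: mab_def, linarith)
    have i2: "adm deg (m(a := m a + 1)) \<Longrightarrow> adm deg m" by (erule adm_mono) simp
    have i3: "adm deg m \<Longrightarrow> adm deg mab \<Longrightarrow> adm deg (m(a := m a + 1))"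
      unfolding adm_def
    proof (intro allI impI)
      fix i assume h1: "\<forall>i. odd (deg i) \<longrightarrow> m i \<le> 1" and h2: "\<forall>i. odd (deg i) \<longrightarrow> mab i \<le> 1"
        and o: "odd (deg i)"
      show "(m(a := m a + 1)) i \<le> 1"
      proof (cases "i = a")
        case True thus ?thesis using h2 o mab_a by (metis fun_upd_same)
      next
        case False thus ?thesis using h1 o by simp
      qed
    qed
    show ?thesis using i1 i2 i3 by blast
  qed
  show ?thesis
  proof (cases "adm deg (m(a := m a + 1)) \<and> 1 \<le> m b")
    case False
    hence L: "sderiv deg a (xmul deg b P) m = 0" unfolding sderiv_def xmul_def using ab by auto
    have "xmul deg b (sderiv deg a P) m = 0"
      using False cond e2 unfolding sderiv_def xmul_def by (auto simp del: fun_upd_apply)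
    thus ?thesis using L ab by simp
  next
    case True
    have a2: "adm deg m" "adm deg mab" using True cond by auto
    have "sderiv deg a (xmul deg b P) m
        = of_nat (m a + 1) * ksign deg a m * (ksign deg b (m(a := m a + 1)) * P mab)"
    proof -
      have k: "ksign deg b mab = ksign deg b (m(a := m a + 1))" unfolding e1[symmetric] by (rule ksign_same)
      show ?thesis
        unfolding sderiv_def xmul_def using True e1 ab by (simp del: fun_upd_apply) (simp add: e1 k)
    qed
    also have "\<dots> = of_nat (m a + 1) * ksign deg a m * ((fsh deg a b * ksign deg b m) * P mab)"
      by (simp only: ksign_inc)
    finally have L: "sderiv deg a (xmul deg b P) m = \<dots>" .
    have "xmul deg b (sderiv deg a P) m
        = ksign deg b m * (of_nat (m a + 1) * ksign deg a (m(b := m b - 1)) * P mab)"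
    proof -
      have k: "ksign deg b (m(b := m b - 1)) = ksign deg b m" by (rule ksign_same)
      show ?thesis
        unfolding sderiv_def xmul_def using True a2 e2 ab by (simp del: fun_upd_apply) (simp add: e2 k ksign_same)
    qed
    also have "\<dots> = ksign deg b m * (of_nat (m a + 1) * (fsh deg b a * ksign deg a m) * P mab)"
      using True by (simp only: ksign_dec')
    finally have R: "xmul deg b (sderiv deg a P) m = \<dots>" .
    show ?thesis unfolding L R using fsh_swap[OF ab, of deg] ab by (simp add: algebra_simps)
  qed
qed

lemma sderiv_lsum: "sderiv deg a (\<lambda>m. \<Sum>x\<in>S. f x m) = (\<lambda>m. \<Sum>x\<in>S. sderiv deg a (f x) m)"
  unfolding sderiv_def by (rule ext) (simp add: sum_distrib_left)
lemma sderiv_lmult: "sderiv deg a (\<lambda>m. c * f m) = (\<lambda>m. c * sderiv deg a f m)"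
  unfolding sderiv_def by (rule ext) (simp add: algebra_simps)
lemma sderiv_ladd: "sderiv deg a (\<lambda>m. f m + g m) = (\<lambda>m. sderiv deg a f m + sderiv deg a g m)"
  unfolding sderiv_def by (rule ext) (simp add: algebra_simps)
lemma xmul_lsum: "xmul deg a (\<lambda>m. \<Sum>x\<in>S. f x m) = (\<lambda>m. \<Sum>x\<in>S. xmul deg a (f x) m)"
  unfolding xmul_def by (rule ext) (auto simp: sum_distrib_left)
lemma xmul_lif: "xmul deg a (\<lambda>m. if P then f m else 0) = (\<lambda>m. if P then xmul deg a f m else 0)"
  unfolding xmul_def by (rule ext) auto
lemma sderiv_lif: "sderiv deg a (\<lambda>m. if P then f m else 0) = (\<lambda>m. if P then sderiv deg a f m else 0)"
  unfolding sderiv_def by (rule ext) auto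
lemma xmul_lmult: "xmul deg a (\<lambda>m. c * f m) = (\<lambda>m. c * xmul deg a f m)"
  unfolding xmul_def by (rule ext) (simp add: algebra_simps)
lemma xmul_ladd: "xmul deg a (\<lambda>m. f m + g m) = (\<lambda>m. xmul deg a f m + xmul deg a g m)"
  unfolding xmul_def by (rule ext) (simp add: algebra_simps)
lemma sderiv_lzero: "sderiv deg a (\<lambda>m. 0) = (\<lambda>m. 0)"
  unfolding sderiv_def by auto
lemma xmul_lzero: "xmul deg a (\<lambda>m. 0) = (\<lambda>m. 0)"
  unfolding xmul_def by auto

lemmas lin_simps = xmul_lif sderiv_lif sderiv_lsum sderiv_lmult sderiv_ladd xmul_lsum xmul_lmult xmul_ladd sderiv_lzero xmul_lzero

lemma sderiv_comm_fun:
  "sderiv deg a (sderiv deg b P) = (\<lambda>m. sg deg a b * sderiv deg b (sderiv deg a P) m)"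
  by (rule ext) (rule sderiv_comm)

lemma sderiv_xmul_fun:
  "sderiv deg a (xmul deg b (sderiv deg c P)) = (\<lambda>m. (if a = b then sderiv deg c P m else 0) + sg deg a b * xmul deg b (sderiv deg a (sderiv deg c P)) m)"
  by (rule ext) (rule sderiv_xmul[OF asupp_sderiv])

lemma sum_if_eq: "(\<Sum>b\<in>(UNIV::'a::finite set). A * (f b * (if c = b then x else 0))) = A * (f c * (x::complex))"
proof -
  have "(\<Sum>b\<in>(UNIV::'a set). A * (f b * (if c = b then x else 0))) = (\<Sum>b\<in>UNIV. if c = b then A * (f b * x) else 0)"
    by (rule sum.cong) auto
  thus ?thesis by simp
qed

lemma kk_sq_sum:
  fixes Kk :: "real^('i::finite)^'i"
  assumes "Kk ** Kk = 0"
  shows "(\<Sum>c\<in>UNIV. Kk $ a $ c * Kk $ c $ d) = 0"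
proof -
  have "(Kk ** Kk) $ a $ d = 0" using assms by simp
  thus ?thesis by (simp add: matrix_matrix_mult_def)
qed

lemma sign_A:
  assumes "deg a + 1 = deg b" "deg c + 1 = deg d"
  shows "sg deg a d * sg deg b d * sg deg a c = - sg deg c b"
proof -
  have "odd (deg b) \<longleftrightarrow> \<not> odd (deg a)" "odd (deg d) \<longleftrightarrow> \<not> odd (deg c)"
    using assms by (auto simp flip: assms)
  thus ?thesis unfolding sg_def by auto
qed

lemma kappa_sq:
  fixes deg :: "'i::{finite,linorder} \<Rightarrow> int" and Kk :: "real^('i::{finite,linorder})^('i::{finite,linorder})"
  assumes ksq: "Kk ** Kk = 0" and kdeg: "\<forall>i j. Kk $ i $ j \<noteq> 0 \<longrightarrow> deg i + 1 = deg j"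
  shows "kappa_hat deg Kk (kappa_hat deg Kk Y) m = 0"
proof -
  let ?k = "\<lambda>a b. complex_of_real (Kk $ a $ b)"
  define X where "X a b c d = xmul deg d (xmul deg b (sderiv deg c (sderiv deg a Y))) m" for a b c d
  define G where "G a b c d = ?k c d * ?k a b * sg deg c b * X a b c d" for a b c d
  have step: "kappa_hat deg Kk (kappa_hat deg Kk Y) m =
     (\<Sum>c\<in>UNIV. \<Sum>d\<in>UNIV. \<Sum>a\<in>UNIV. \<Sum>b\<in>UNIV. ?k c d * (?k a b *
        ((if c = b then xmul deg d (sderiv deg a Y) m else 0) + sg deg c b * xmul deg d (xmul deg b (sderiv deg c (sderiv deg a Y))) m)))"
    unfolding kappa_hat_def by (simp add: lin_simps sderiv_xmul_fun sum_distrib_left)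
  also have "\<dots> = (\<Sum>c\<in>UNIV. \<Sum>d\<in>UNIV. \<Sum>a\<in>UNIV. \<Sum>b\<in>UNIV. ?k c d * (?k a b * (if c = b then xmul deg d (sderiv deg a Y) m else 0)))
      + (\<Sum>c\<in>UNIV. \<Sum>d\<in>UNIV. \<Sum>a\<in>UNIV. \<Sum>b\<in>UNIV. G a b c d)"
    unfolding G_def X_def by (simp only: distrib_left sum.distrib mult.assoc)
  also have "(\<Sum>c\<in>UNIV. \<Sum>d\<in>UNIV. \<Sum>a\<in>UNIV. \<Sum>b\<in>UNIV. ?k c d * (?k a b * (if c = b then xmul deg d (sderiv deg a Y) m else 0))) = 0"
  proof -
    have "(\<Sum>c\<in>UNIV. \<Sum>d\<in>UNIV. \<Sum>a\<in>UNIV. \<Sum>b\<in>UNIV. ?k c d * (?k a b * (if c = b then xmul deg d (sderiv deg a Y) m else 0)))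
       = (\<Sum>c\<in>UNIV. \<Sum>d\<in>UNIV. \<Sum>a\<in>UNIV. ?k c d * ?k a c * xmul deg d (sderiv deg a Y) m)"
      by (intro sum.cong refl) (simp only: sum_if_eq mult.assoc)
    also have "\<dots> = (\<Sum>d\<in>UNIV. \<Sum>a\<in>UNIV. \<Sum>c\<in>UNIV. ?k c d * ?k a c * xmul deg d (sderiv deg a Y) m)"
      by (subst sum.swap) (rule sum.cong[OF refl], rule sum.swap)
    also have "\<dots> = (\<Sum>d\<in>UNIV. \<Sum>a\<in>UNIV. of_real (\<Sum>c\<in>UNIV. Kk $ a $ c * Kk $ c $ d) * xmul deg d (sderiv deg a Y) m)"
      by (simp add: sum_distrib_left sum_distrib_right mult_ac)
    also have "\<dots> = 0" using kk_sq_sum[OF ksq] by simp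
    finally show ?thesis .
  qed
  also have "(\<Sum>c\<in>UNIV. \<Sum>d\<in>UNIV. \<Sum>a\<in>UNIV. \<Sum>b\<in>UNIV. G a b c d) = 0"
  proof -
    have anti: "G c d a b = - G a b c d" for a b c d
    proof (cases "Kk $ a $ b = 0 \<or> Kk $ c $ d = 0")
      case True thus ?thesis unfolding G_def by auto
    next
      case False
      hence dg: "deg a + 1 = deg b" "deg c + 1 = deg d" using kdeg by auto
      have Xe: "X c d a b = sg deg b d * sg deg a c * X a b c d"
        unfolding X_def by (simp add: xmul_comm[of deg b] sderiv_comm_fun[of deg a c] lin_simps)
      have "G c d a b = ?k a b * ?k c d * (sg deg a d * sg deg b d * sg deg a c) * X a b c d"
        unfolding G_def Xe by (simp only: mult_ac)
      also have "\<dots> = ?k a b * ?k c d * (- sg deg c b) * X a b c d"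
        using sign_A[where deg=deg and a=a and b=b and c=c and d=d, OF dg] by simp
      also have "\<dots> = - G a b c d" unfolding G_def by (simp only: mult_ac mult_minus_left mult_minus_right)
      finally show ?thesis .
    qed
    have "(\<Sum>c\<in>UNIV. \<Sum>d\<in>UNIV. \<Sum>a\<in>UNIV. \<Sum>b\<in>UNIV. G a b c d)
        = (\<Sum>c\<in>UNIV. \<Sum>a\<in>UNIV. \<Sum>d\<in>UNIV. \<Sum>b\<in>UNIV. G a b c d)"
      by (rule sum.cong[OF refl]) (rule sum.swap)
    also have "\<dots> = (\<Sum>a\<in>UNIV. \<Sum>c\<in>UNIV. \<Sum>d\<in>UNIV. \<Sum>b\<in>UNIV. G a b c d)"
      by (rule sum.swap)
    also have "\<dots> = (\<Sum>a\<in>UNIV. \<Sum>c\<in>UNIV. \<Sum>b\<in>UNIV. \<Sum>d\<in>UNIV. G a b c d)"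
      by (rule sum.cong[OF refl], rule sum.cong[OF refl], rule sum.swap)
    also have "\<dots> = (\<Sum>a\<in>UNIV. \<Sum>b\<in>UNIV. \<Sum>c\<in>UNIV. \<Sum>d\<in>UNIV. G a b c d)"
      by (rule sum.cong[OF refl], rule sum.swap)
    also have "\<dots> = (\<Sum>a\<in>UNIV. \<Sum>b\<in>UNIV. \<Sum>c\<in>UNIV. \<Sum>d\<in>UNIV. - G c d a b)"
      by (intro sum.cong refl) (rule anti)
    finally have "(\<Sum>c\<in>UNIV. \<Sum>d\<in>UNIV. \<Sum>a\<in>UNIV. \<Sum>b\<in>UNIV. G a b c d)
        = - (\<Sum>c\<in>UNIV. \<Sum>d\<in>UNIV. \<Sum>a\<in>UNIV. \<Sum>b\<in>UNIV. G a b c d)"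
      by (simp add: sum_negf)
    thus ?thesis by simp
  qed
  finally show ?thesis by simp
qed

lemma inv_props:
  fixes W :: "real^('i::finite)^'i"
  assumes "invertible W"
  shows "W ** matrix_inv W = mat 1" "matrix_inv W ** W = mat 1"
proof -
  have "\<exists>A'. W ** A' = mat 1 \<and> A' ** W = mat 1" using assms unfolding invertible_def by blast
  hence "W ** matrix_inv W = mat 1 \<and> matrix_inv W ** W = mat 1"
    unfolding matrix_inv_def by (rule someI_ex)
  thus "W ** matrix_inv W = mat 1" "matrix_inv W ** W = mat 1" by auto
qed

lemma inv_transpose:
  fixes W V :: "real^('i::finite)^'i"
  assumes "W ** V = mat 1" "V ** W = mat 1" "transpose W = W"
  shows "transpose V = V"
proof -
  have "transpose V ** W = mat 1"
    using arg_cong[OF assms(1), of transpose] assms(3) by (simp add: matrix_transpose_mul)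
  hence "V = (transpose V ** W) ** V" by simp
  also have "\<dots> = transpose V ** (W ** V)" by (simp add: matrix_mul_assoc)
  also have "\<dots> = transpose V" using assms(1) by simp
  finally show ?thesis by simp
qed

lemma inv_conj:
  fixes W V :: "real^('i::finite)^'i" and e :: "'i \<Rightarrow> real" and c :: real
  assumes WV: "W ** V = mat 1" and VW: "V ** W = mat 1" and e: "\<And>i. e i * e i = 1" and c: "c * c = 1"
    and hW: "\<And>i j. W $ i $ j \<noteq> 0 \<Longrightarrow> e i * e j = c"
  shows "V $ i $ j \<noteq> 0 \<Longrightarrow> e i * e j = c"
proof -
  define V' where "V' = (\<chi> i j. c * e i * e j * V $ i $ j)"
  have tm: "W $ i $ j * (c * e j * e k * V $ j $ k) = e i * e k * (W $ i $ j * V $ j $ k)" for i j k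
  proof (cases "W $ i $ j = 0")
    case False
    hence "e i * e j = c" by (rule hW)
    hence "e i * e j * e j = c * e j" by simp
    hence ce: "c * e j = e i" using e[of j] by (simp add: mult.assoc)
    show ?thesis unfolding ce[symmetric] by (simp only: mult_ac)
  qed simp
  have "W ** V' = mat 1"
  proof -
    have "(W ** V') $ i $ k = (mat 1 :: real^'i^'i) $ i $ k" for i k
    proof -
      have "(W ** V') $ i $ k = (\<Sum>j\<in>UNIV. W $ i $ j * (c * e j * e k * V $ j $ k))"
        by (simp add: matrix_matrix_mult_def V'_def)
      also have "\<dots> = e i * e k * (\<Sum>j\<in>UNIV. W $ i $ j * V $ j $ k)"
        by (simp only: tm sum_distrib_left)
      also have "\<dots> = e i * e k * (W ** V) $ i $ k" by (simp add: matrix_matrix_mult_def)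
      also have "\<dots> = (mat 1 :: real^'i^'i) $ i $ k"
      proof -
        have "(W ** V) $ i $ k = (if i = k then 1 else 0)" using WV by (simp add: mat_def)
        thus ?thesis using e[of i] by (cases "i = k") (simp_all add: mat_def)
      qed
      finally show ?thesis .
    qed
    thus ?thesis by (simp add: vec_eq_iff)
  qed
  hence "V' = V"
  proof -
    assume h: "W ** V' = mat 1"
    have "V' = (V ** W) ** V'" using VW by simp
    also have "\<dots> = V ** (W ** V')" by (simp add: matrix_mul_assoc)
    also have "\<dots> = V" using h by simp
    finally show ?thesis .
  qed
  hence "V' $ i $ j = V $ i $ j" by simp
  hence "c * e i * e j * V $ i $ j = V $ i $ j" unfolding V'_def by simp
  moreover assume "V $ i $ j \<noteq> 0"
  ultimately have "c * e i * e j = 1" by simp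
  hence "c * (c * e i * e j) = c" by simp
  thus ?thesis using c by (simp add: mult.assoc[symmetric])
qed


lemma winv_facts:
  fixes deg :: "'i::{finite,linorder} \<Rightarrow> int" and W :: "real^('i::{finite,linorder})^('i::{finite,linorder})"
  assumes w_deg: "\<forall>i j. W $ i $ j \<noteq> 0 \<longrightarrow> deg i + deg j = 1"
    and w_sym: "transpose W = W"
    and w_nondeg: "invertible W"
    and split_w: "\<forall>i j. W $ i $ j \<noteq> 0 \<longrightarrow> (i \<in> I2 \<longleftrightarrow> j \<in> I2)"
  shows "\<forall>i j. matrix_inv W $ i $ j \<noteq> 0 \<longrightarrow> (odd (deg i) \<longleftrightarrow> \<not> odd (deg j))"
    and "\<forall>i j. matrix_inv W $ i $ j = matrix_inv W $ j $ i"
    and "\<forall>i j. matrix_inv W $ i $ j \<noteq> 0 \<longrightarrow> j \<in> I2 \<longrightarrow> i \<in> I2"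
proof -
  note inv = inv_props[OF w_nondeg]
  show "\<forall>i j. matrix_inv W $ i $ j \<noteq> 0 \<longrightarrow> (odd (deg i) \<longleftrightarrow> \<not> odd (deg j))"
  proof (intro allI impI)
    fix i j assume h: "matrix_inv W $ i $ j \<noteq> 0"
    let ?e = "\<lambda>i. if odd (deg i) then -1 else (1::real)"
    have hW: "?e i * ?e j = -1" if "W $ i $ j \<noteq> 0" for i j
    proof -
      have "deg i + deg j = 1" using w_deg that by auto
      hence "odd (deg i + deg j)" by simp
      hence "odd (deg i) \<longleftrightarrow> \<not> odd (deg j)" by simp
      thus ?thesis by auto
    qed
    have "?e i * ?e j = -1"
      by (rule inv_conj[OF inv(1) inv(2), of ?e "-1"]) (use hW h in auto)
    thus "odd (deg i) \<longleftrightarrow> \<not> odd (deg j)" by (auto split: if_splits)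
  qed
  show "\<forall>i j. matrix_inv W $ i $ j \<noteq> 0 \<longrightarrow> j \<in> I2 \<longrightarrow> i \<in> I2"
  proof (intro allI impI)
    fix i j assume h: "matrix_inv W $ i $ j \<noteq> 0" and j: "j \<in> I2"
    let ?e = "\<lambda>i. if i \<in> I2 then 1 else (-1::real)"
    have hW: "?e i * ?e j = 1" if "W $ i $ j \<noteq> 0" for i j
      using split_w that by auto
    have "?e i * ?e j = 1"
      by (rule inv_conj[OF inv(1) inv(2), of ?e "1"]) (use hW h in auto)
    thus "i \<in> I2" using j by (auto split: if_splits)
  qed
  have "transpose (matrix_inv W) = matrix_inv W"
    by (rule inv_transpose[OF inv(1) inv(2) w_sym])
  hence "transpose (matrix_inv W) $ i $ j = matrix_inv W $ i $ j" for i j by simp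
  thus "\<forall>i j. matrix_inv W $ i $ j = matrix_inv W $ j $ i"
    by (simp add: transpose_def)
qed

lemma d3:
  "sderiv deg i (sderiv deg j (sderiv deg a Y)) = (\<lambda>m. sg deg j a * sg deg i a * sderiv deg a (sderiv deg i (sderiv deg j Y)) m)"
proof -
  have "sderiv deg i (sderiv deg j (sderiv deg a Y)) = sderiv deg i (\<lambda>m. sg deg j a * sderiv deg a (sderiv deg j Y) m)"
    by (simp only: sderiv_comm_fun[of deg j a])
  also have "\<dots> = (\<lambda>m. sg deg j a * sderiv deg i (sderiv deg a (sderiv deg j Y)) m)"
    by (simp only: sderiv_lmult)
  also have "\<dots> = (\<lambda>m. sg deg j a * (sg deg i a * sderiv deg a (sderiv deg i (sderiv deg j Y)) m))"
    by (simp only: sderiv_comm_fun[of deg i a])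
  finally show ?thesis by (simp add: mult.assoc)
qed

lemma Eexp:
  "sderiv deg i (sderiv deg j (kappa_hat deg Kk Y)) m =
    (\<Sum>a\<in>UNIV. \<Sum>b\<in>UNIV. complex_of_real (Kk $ a $ b) *
       ((if j = b then sderiv deg i (sderiv deg a Y) m else 0) + sg deg j b *
        ((if i = b then sderiv deg j (sderiv deg a Y) m else 0) + sg deg i b *
          xmul deg b (sderiv deg i (sderiv deg j (sderiv deg a Y))) m)))"
  unfolding kappa_hat_def by (simp add: lin_simps sderiv_xmul_fun)




lemma sign_B:
  assumes "odd (deg i) \<longleftrightarrow> \<not> odd (deg j)" "deg a + 1 = deg b"
  shows "sg deg j b * sg deg i b * sg deg j a * sg deg i a = -1"
proof -
  have "odd (deg b) \<longleftrightarrow> \<not> odd (deg a)" using assms(2) by (auto simp flip: assms(2))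
  thus ?thesis using assms(1) unfolding sg_def by auto
qed

lemma sum_if_eq2: "(\<Sum>b\<in>(UNIV::'a::finite set). (if j = b then f b else 0)) = (f j :: complex)"
  by simp

lemma sum_swap4: "(\<Sum>i\<in>A. \<Sum>j\<in>B. \<Sum>a\<in>C. \<Sum>b\<in>D. f i j a b) = (\<Sum>a\<in>C. \<Sum>b\<in>D. \<Sum>i\<in>A. \<Sum>j\<in>B. f i j a b)"
proof -
  have "(\<Sum>i\<in>A. \<Sum>j\<in>B. \<Sum>a\<in>C. \<Sum>b\<in>D. f i j a b) = (\<Sum>i\<in>A. \<Sum>a\<in>C. \<Sum>j\<in>B. \<Sum>b\<in>D. f i j a b)"
    by (rule sum.cong[OF refl], rule sum.swap)
  also have "\<dots> = (\<Sum>a\<in>C. \<Sum>i\<in>A. \<Sum>j\<in>B. \<Sum>b\<in>D. f i j a b)" by (rule sum.swap)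
  also have "\<dots> = (\<Sum>a\<in>C. \<Sum>i\<in>A. \<Sum>b\<in>D. \<Sum>j\<in>B. f i j a b)"
    by (rule sum.cong[OF refl], rule sum.cong[OF refl], rule sum.swap)
  also have "\<dots> = (\<Sum>a\<in>C. \<Sum>b\<in>D. \<Sum>i\<in>A. \<Sum>j\<in>B. f i j a b)"
    by (rule sum.cong[OF refl], rule sum.swap)
  finally show ?thesis .
qed

lemma bvlap_kappa:
  fixes deg :: "'i::{finite,linorder} \<Rightarrow> int" and W Kk :: "real^('i::{finite,linorder})^('i::{finite,linorder})"
  assumes winv1: "\<forall>i j. matrix_inv W $ i $ j \<noteq> 0 \<longrightarrow> (odd (deg i) \<longleftrightarrow> \<not> odd (deg j))"
    and winv2: "\<forall>i j. matrix_inv W $ i $ j = matrix_inv W $ j $ i"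
    and winv3: "\<forall>i j. matrix_inv W $ i $ j \<noteq> 0 \<longrightarrow> j \<in> I2 \<longrightarrow> i \<in> I2"
    and kdeg: "\<forall>i j. Kk $ i $ j \<noteq> 0 \<longrightarrow> deg i + 1 = deg j"
    and k_iota: "\<forall>i j. j \<notin> I2 \<longrightarrow> Kk $ i $ j = 0"
    and k_pi: "\<forall>i j. i \<notin> I2 \<longrightarrow> Kk $ i $ j = 0"
  shows "bvlap deg W (kappa_hat deg Kk Y) m = eta deg W Kk I2 Y m - kappa_hat deg Kk (bvlap deg W Y) m"
proof -
  let ?w = "\<lambda>i j. complex_of_real (matrix_inv W $ i $ j)"
  let ?k = "\<lambda>a b. complex_of_real (Kk $ a $ b)"
  let ?d = "sderiv deg" and ?x = "xmul deg"
  define T where "T = (\<Sum>i\<in>UNIV. \<Sum>a\<in>UNIV. \<Sum>b\<in>UNIV. ?w i b * ?k a b * ?d i (?d a Y) m)"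
  define S1 where "S1 = (\<Sum>i\<in>UNIV. \<Sum>j\<in>UNIV. \<Sum>a\<in>UNIV. \<Sum>b\<in>UNIV. ?w i j * (?k a b * (if j = b then ?d i (?d a Y) m else 0)))"
  define S2 where "S2 = (\<Sum>i\<in>UNIV. \<Sum>j\<in>UNIV. \<Sum>a\<in>UNIV. \<Sum>b\<in>UNIV. ?w i j * (?k a b * (sg deg j b * (if i = b then ?d j (?d a Y) m else 0))))"
  define S3 where "S3 = (\<Sum>i\<in>UNIV. \<Sum>j\<in>UNIV. \<Sum>a\<in>UNIV. \<Sum>b\<in>UNIV. ?w i j * (?k a b * (sg deg j b * (sg deg i b *
          ?x b (?d i (?d j (?d a Y))) m))))"
  have L: "bvlap deg W (kappa_hat deg Kk Y) m = 1/2 * (S1 + S2 + S3)"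
    unfolding bvlap_def Eexp S1_def S2_def S3_def
    by (simp only: distrib_left sum.distrib sum_distrib_left add.assoc)
  have S1: "S1 = T"
  proof -
    have "S1 = (\<Sum>i\<in>UNIV. \<Sum>a\<in>UNIV. \<Sum>b\<in>UNIV. \<Sum>j\<in>UNIV. ?w i j * (?k a b * (if j = b then ?d i (?d a Y) m else 0)))"
      unfolding S1_def
      by (rule sum.cong[OF refl], subst sum.swap, rule sum.cong[OF refl], rule sum.swap)
    also have "\<dots> = T" unfolding T_def
      by (intro sum.cong refl) (simp add: if_distrib[where f="\<lambda>x. _ * x"] cong: if_cong)
    finally show ?thesis .
  qed
  have S2: "S2 = T"
  proof -
    have "S2 = (\<Sum>j\<in>UNIV. \<Sum>a\<in>UNIV. \<Sum>b\<in>UNIV. \<Sum>i\<in>UNIV. ?w i j * (?k a b * (sg deg j b * (if i = b then ?d j (?d a Y) m else 0))))"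
      unfolding S2_def
      by (subst sum.swap, rule sum.cong[OF refl], subst sum.swap, rule sum.cong[OF refl], rule sum.swap)
    also have "\<dots> = (\<Sum>j\<in>UNIV. \<Sum>a\<in>UNIV. \<Sum>b\<in>UNIV. ?w b j * (?k a b * (sg deg j b * ?d j (?d a Y) m)))"
      by (intro sum.cong refl) (simp add: if_distrib[where f="\<lambda>x. _ * x"] cong: if_cong)
    also have "\<dots> = T" unfolding T_def
    proof (intro sum.cong refl)
      fix j a b
      show "?w b j * (?k a b * (sg deg j b * ?d j (?d a Y) m)) = ?w j b * ?k a b * ?d j (?d a Y) m"
      proof (cases "matrix_inv W $ b $ j = 0")
        case False
        hence "sg deg j b = 1" using winv1 unfolding sg_def by auto
        thus ?thesis using winv2 by simp
      qed (use winv2 in simp)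
    qed
    finally show ?thesis .
  qed
  have S3: "S3 = - 2 * kappa_hat deg Kk (bvlap deg W Y) m"
  proof -
    have "S3 = (\<Sum>i\<in>UNIV. \<Sum>j\<in>UNIV. \<Sum>a\<in>UNIV. \<Sum>b\<in>UNIV. - (?k a b * (?w i j * ?x b (?d a (?d i (?d j Y))) m)))"
      unfolding S3_def
    proof (intro sum.cong refl)
      fix i j a b
      have dd: "?x b (?d i (?d j (?d a Y))) m = sg deg j a * sg deg i a * ?x b (?d a (?d i (?d j Y))) m"
        by (subst d3) (simp only: xmul_lmult)
      show "?w i j * (?k a b * (sg deg j b * (sg deg i b * ?x b (?d i (?d j (?d a Y))) m)))
          = - (?k a b * (?w i j * ?x b (?d a (?d i (?d j Y))) m))"
      proof (cases "matrix_inv W $ i $ j = 0 \<or> Kk $ a $ b = 0")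
        case False
        have p: "odd (deg i) \<longleftrightarrow> \<not> odd (deg j)" using winv1 False by auto
        have q: "deg a + 1 = deg b" using kdeg False by auto
        have sgn: "sg deg j b * sg deg i b * sg deg j a * sg deg i a = -1" by (rule sign_B[where deg=deg and i=i and j=j and a=a and b=b, OF p q])
        have "?w i j * (?k a b * (sg deg j b * (sg deg i b * ?x b (?d i (?d j (?d a Y))) m)))
            = (sg deg j b * sg deg i b * sg deg j a * sg deg i a) * (?k a b * (?w i j * ?x b (?d a (?d i (?d j Y))) m))"
          unfolding dd by (simp only: mult_ac)
        thus ?thesis unfolding sgn by simp
      qed auto
    qed
    also have "\<dots> = - (\<Sum>a\<in>UNIV. \<Sum>b\<in>UNIV. \<Sum>i\<in>UNIV. \<Sum>j\<in>UNIV. ?k a b * (?w i j * ?x b (?d a (?d i (?d j Y))) m))"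
      by (subst sum_swap4) (simp only: sum_negf)
    also have "\<dots> = - 2 * kappa_hat deg Kk (bvlap deg W Y) m"
    proof -
      have "kappa_hat deg Kk (bvlap deg W Y) m = (\<Sum>a\<in>UNIV. \<Sum>b\<in>UNIV. ?k a b * (1/2 * (\<Sum>i\<in>UNIV. \<Sum>j\<in>UNIV. ?w i j * ?x b (?d a (?d i (?d j Y))) m)))"
        unfolding kappa_hat_def bvlap_def by (simp only: lin_simps)
      also have "\<dots> = 1/2 * (\<Sum>a\<in>UNIV. \<Sum>b\<in>UNIV. \<Sum>i\<in>UNIV. \<Sum>j\<in>UNIV. ?k a b * (?w i j * ?x b (?d a (?d i (?d j Y))) m))"
        by (simp only: sum_distrib_left mult.left_commute)
      finally show ?thesis by (simp add: mult.commute)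
    qed
    finally show ?thesis .
  qed
  have E: "eta deg W Kk I2 Y m = T"
  proof -
    define F where "F i a b = ?w i b * ?k a b * ?d i (?d a Y) m" for i a b
    have F0: "F i a b = 0" if "\<not> (i \<in> I2 \<and> a \<in> I2 \<and> b \<in> I2)" for i a b
    proof -
      have "Kk $ a $ b = 0 \<or> matrix_inv W $ i $ b = 0" using that k_iota k_pi winv3 by blast
      thus ?thesis unfolding F_def by auto
    qed
    have "eta deg W Kk I2 Y m = (\<Sum>i\<in>I2. \<Sum>a\<in>I2. \<Sum>b\<in>I2. F i a b)"
      unfolding eta_def hmat_def F_def
      by (simp only: of_real_sum of_real_mult sum_distrib_right)
    also have "\<dots> = (\<Sum>i\<in>UNIV. \<Sum>a\<in>UNIV. \<Sum>b\<in>UNIV. F i a b)"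
    proof -
      have s1: "(\<Sum>b\<in>UNIV. F i a b) = (\<Sum>b\<in>I2. F i a b)" for i a
        by (rule sum.mono_neutral_right) (auto simp: F0)
      have s2: "(\<Sum>a\<in>UNIV. \<Sum>b\<in>I2. F i a b) = (\<Sum>a\<in>I2. \<Sum>b\<in>I2. F i a b)" for i
        by (rule sum.mono_neutral_right) (auto simp: F0)
      have s3: "(\<Sum>i\<in>UNIV. \<Sum>a\<in>I2. \<Sum>b\<in>I2. F i a b) = (\<Sum>i\<in>I2. \<Sum>a\<in>I2. \<Sum>b\<in>I2. F i a b)"
        by (rule sum.mono_neutral_right) (auto simp: F0)
      show ?thesis by (simp only: s1 s2 s3)
    qed
    finally show ?thesis unfolding T_def F_def .
  qed
  show ?thesis unfolding L S1 S2 S3 E by simp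
qed




lemma finite_I2: "finite (I2 :: ('i::finite) set)" by simp

lemma Ndeg_inc: "a \<in> I2 \<Longrightarrow> Ndeg I2 (m(a := m a + 1)) = Ndeg I2 m + 1" for I2 :: "('i::finite) set"
  unfolding Ndeg_def using sum_upd_inc[of I2 m a] by simp

lemma Ndeg_dec: "b \<in> I2 \<Longrightarrow> 1 \<le> m b \<Longrightarrow> Ndeg I2 (m(b := m b - 1)) + 1 = Ndeg I2 m" for I2 :: "('i::finite) set"
proof -
  assume b: "b \<in> I2" and mb: "1 \<le> m b"
  have "m = (m(b := m b - 1))(b := (m(b := m b - 1)) b + 1)" using mb by auto
  hence "Ndeg I2 m = Ndeg I2 ((m(b := m b - 1))(b := (m(b := m b - 1)) b + 1))" by simp
  also have "\<dots> = Ndeg I2 (m(b := m b - 1)) + 1" by (rule Ndeg_inc[OF b])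
  finally show ?thesis by simp
qed

lemma sderiv_nz: "sderiv deg a Y m \<noteq> 0 \<Longrightarrow> Y (m(a := m a + 1)) \<noteq> 0"
  unfolding sderiv_def by (cases "adm deg (m(a := m a + 1))") (simp_all del: fun_upd_apply)

lemma xmul_nz: "xmul deg b Y m \<noteq> 0 \<Longrightarrow> 1 \<le> m b \<and> Y (m(b := m b - 1)) \<noteq> 0"
proof -
  assume h: "xmul deg b Y m \<noteq> 0"
  have c: "adm deg m \<and> 1 \<le> m b"
  proof (rule ccontr)
    assume "\<not> (adm deg m \<and> 1 \<le> m b)"
    hence "xmul deg b Y m = 0" unfolding xmul_def by (rule if_not_P)
    thus False using h by simp
  qed
  have "xmul deg b Y m = ksign deg b (m(b := m b - 1)) * Y (m(b := m b - 1))"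
    unfolding xmul_def by (rule if_P[OF c])
  thus ?thesis using h c by auto
qed

lemma sum_nz: "sum f A \<noteq> 0 \<Longrightarrow> \<exists>a\<in>A. f a \<noteq> 0"
  by (meson sum.neutral)

lemma homN_kappa:
  fixes deg :: "'i::{finite,linorder} \<Rightarrow> int" and Kk :: "real^('i::{finite,linorder})^('i::{finite,linorder})"
  assumes k_iota: "\<forall>i j. j \<notin> I2 \<longrightarrow> Kk $ i $ j = 0"
    and k_pi: "\<forall>i j. i \<notin> I2 \<longrightarrow> Kk $ i $ j = 0"
    and h: "homN I2 n Y"
  shows "homN I2 n (kappa_hat deg Kk Y)"
  unfolding homN_def
proof (intro allI impI)
  fix m assume "kappa_hat deg Kk Y m \<noteq> 0"
  then obtain a where "(\<Sum>b\<in>UNIV. complex_of_real (Kk $ a $ b) * xmul deg b (sderiv deg a Y) m) \<noteq> 0"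
    unfolding kappa_hat_def using sum_nz by blast
  then obtain b where nz: "complex_of_real (Kk $ a $ b) * xmul deg b (sderiv deg a Y) m \<noteq> 0"
    using sum_nz by blast
  hence kab: "Kk $ a $ b \<noteq> 0" by auto
  have ab: "a \<in> I2" "b \<in> I2" using kab k_iota k_pi by blast+
  from nz have "xmul deg b (sderiv deg a Y) m \<noteq> 0" by simp
  from xmul_nz[OF this] have mb: "1 \<le> m b" and s: "sderiv deg a Y (m(b := m b - 1)) \<noteq> 0" by auto
  let ?m' = "m(b := m b - 1)"
  from sderiv_nz[OF s] have "Y (?m'(a := ?m' a + 1)) \<noteq> 0" .
  hence "Ndeg I2 (?m'(a := ?m' a + 1)) = n" using h unfolding homN_def by blast
  thus "Ndeg I2 m = n" using Ndeg_inc[of a I2 "m(b := m b - 1)", OF ab(1)] Ndeg_dec[of b I2 m, OF ab(2) mb] by simp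
qed

lemma homN_eta:
  assumes h: "homN I2 n Y"
  shows "homN I2 (n - 2) (eta deg W Kk I2 Y)"
  unfolding homN_def
proof (intro allI impI)
  fix m assume "eta deg W Kk I2 Y m \<noteq> 0"
  then obtain a where a: "a \<in> I2" and "(\<Sum>b\<in>I2. complex_of_real (hmat W Kk I2 a b) * sderiv deg a (sderiv deg b Y) m) \<noteq> 0"
    unfolding eta_def using sum_nz by blast
  then obtain b where b: "b \<in> I2" and nz: "complex_of_real (hmat W Kk I2 a b) * sderiv deg a (sderiv deg b Y) m \<noteq> 0"
    using sum_nz by blast
  have ab: "a \<in> I2" "b \<in> I2" using a b by auto
  from nz have "sderiv deg a (sderiv deg b Y) m \<noteq> 0" by simp
  from sderiv_nz[OF this] have s1: "sderiv deg b Y (m(a := m a + 1)) \<noteq> 0" .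
  let ?m1 = "m(a := m a + 1)"
  from sderiv_nz[OF s1] have "Y (?m1(b := ?m1 b + 1)) \<noteq> 0" .
  hence "Ndeg I2 (?m1(b := ?m1 b + 1)) = n" using h unfolding homN_def by blast
  thus "Ndeg I2 m = n - 2" using Ndeg_inc[of b I2 "m(a := m a + 1)", OF ab(2)] Ndeg_inc[of a I2 m, OF ab(1)] by simp
qed

lemma homN_scale: "homN I2 n Y \<Longrightarrow> homN I2 n (\<lambda>m. c * Y m)"
  unfolding homN_def by auto

lemma nu_hom: "homN I2 n Y \<Longrightarrow> nu I2 Y = (\<lambda>m. Y m / of_nat n)"
  unfolding homN_def nu_def by (rule ext) auto

definition linop :: "(('a \<Rightarrow> complex) \<Rightarrow> ('a \<Rightarrow> complex)) \<Rightarrow> bool" where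
  "linop L \<longleftrightarrow> (\<forall>f g. L (\<lambda>m. f m + g m) = (\<lambda>m. L f m + L g m)) \<and> (\<forall>c f. L (\<lambda>m. c * f m) = (\<lambda>m. c * L f m))"

lemma linop_add: "linop L \<Longrightarrow> L (\<lambda>m. f m + g m) = (\<lambda>m. L f m + L g m)"
  unfolding linop_def by blast
lemma linop_mult: "linop L \<Longrightarrow> L (\<lambda>m. c * f m) = (\<lambda>m. c * L f m)"
  unfolding linop_def by blast
lemma linop_zero: "linop L \<Longrightarrow> L (\<lambda>m. 0) = (\<lambda>m. 0)"
  using linop_mult[of L 0 "\<lambda>m. 0"] by simp

lemma linop_sum:
  assumes L: "linop L" and fin: "finite S"
  shows "L (\<lambda>m. \<Sum>x\<in>S. f x m) = (\<lambda>m. \<Sum>x\<in>S. L (f x) m)"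
  using fin
proof (induction S rule: finite_induct)
  case empty thus ?case using L by (simp add: linop_zero)
next
  case (insert x F)
  have "L (\<lambda>m. \<Sum>y\<in>insert x F. f y m) = L (\<lambda>m. f x m + (\<Sum>y\<in>F. f y m))"
    using insert by simp
  also have "\<dots> = (\<lambda>m. L (f x) m + L (\<lambda>m. \<Sum>y\<in>F. f y m) m)"
    by (rule linop_add[OF L])
  also have "\<dots> = (\<lambda>m. \<Sum>y\<in>insert x F. L (f y) m)" using insert by simp
  finally show ?case .
qed

lemma linop_comp: "linop L1 \<Longrightarrow> linop L2 \<Longrightarrow> linop (\<lambda>X. L1 (L2 X))"
  unfolding linop_def by simp

lemma linop_id: "linop (\<lambda>X. X)"
  unfolding linop_def by simp

lemma linop_funpow: "linop L \<Longrightarrow> linop (L ^^ k)"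
proof (induction k)
  case 0 thus ?case by (simp add: linop_id[unfolded id_def[symmetric]] id_def linop_def)
next
  case (Suc k)
  have "linop (\<lambda>X. L ((L ^^ k) X))" by (rule linop_comp[OF Suc(2) Suc(1)[OF Suc(2)]])
  thus ?case by (simp add: comp_def)
qed

lemma linop_cmul: "linop L \<Longrightarrow> linop (\<lambda>X m. c * L X m)"
  unfolding linop_def by (simp add: algebra_simps)

lemma linop_sderiv: "linop (sderiv deg a)"
  unfolding linop_def by (simp add: lin_simps)
lemma linop_xmul: "linop (xmul deg a)"
  unfolding linop_def by (simp add: lin_simps)

lemma linop_kappa: "linop (kappa_hat deg Kk)"
  unfolding linop_def kappa_hat_def
  by (simp only: lin_simps distrib_left sum.distrib sum_distrib_left mult.left_commute simp_thms allI)

lemma linop_bvlap: "linop (bvlap deg W)"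
  unfolding linop_def bvlap_def
  by (simp only: lin_simps distrib_left sum.distrib sum_distrib_left mult.left_commute simp_thms allI)

lemma linop_eta: "linop (eta deg W Kk I2)"
  unfolding linop_def eta_def
  by (simp only: lin_simps distrib_left sum.distrib sum_distrib_left mult.left_commute simp_thms allI)

lemma linop_nu: "linop (nu I2)"
  unfolding linop_def nu_def by (auto simp: fun_eq_iff add_divide_distrib)




lemma homN_etapow:
  "homN I2 n P \<Longrightarrow> homN I2 (n - 2 * k) ((eta deg W Kk I2 ^^ k) P)"
proof (induction k)
  case 0 thus ?case by simp
next
  case (Suc k)
  have "homN I2 (n - 2 * k - 2) (eta deg W Kk I2 ((eta deg W Kk I2 ^^ k) P))"
    by (rule homN_eta[OF Suc.IH[OF Suc.prems]])
  moreover have "n - 2 * k - 2 = n - 2 * Suc k" by simp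
  ultimately show ?case by simp
qed

lemma LHS_term:
  fixes deg :: "'i::{finite,linorder} \<Rightarrow> int" and W Kk :: "real^('i::{finite,linorder})^('i::{finite,linorder})"
  assumes winv1: "\<forall>i j. matrix_inv W $ i $ j \<noteq> 0 \<longrightarrow> (odd (deg i) \<longleftrightarrow> \<not> odd (deg j))"
    and winv2: "\<forall>i j. matrix_inv W $ i $ j = matrix_inv W $ j $ i"
    and winv3: "\<forall>i j. matrix_inv W $ i $ j \<noteq> 0 \<longrightarrow> j \<in> I2 \<longrightarrow> i \<in> I2"
    and kdeg: "\<forall>i j. Kk $ i $ j \<noteq> 0 \<longrightarrow> deg i + 1 = deg j"
    and k_iota: "\<forall>i j. j \<notin> I2 \<longrightarrow> Kk $ i $ j = 0"
    and k_pi: "\<forall>i j. i \<notin> I2 \<longrightarrow> Kk $ i $ j = 0"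
    and ksq: "Kk ** Kk = 0"
    and hP: "homN I2 n P"
  shows "nu I2 (kappa_hat deg Kk (((\<lambda>X m'. hb * bvlap deg W (nu I2 (kappa_hat deg Kk X)) m') ^^ k) P))
       = (\<lambda>m. hb ^ k / (\<Prod>l\<le>k. of_nat (n - 2 * l)) * kappa_hat deg Kk ((eta deg W Kk I2 ^^ k) P) m)"
proof (induction k)
  case 0
  have "homN I2 n (kappa_hat deg Kk P)" by (rule homN_kappa[OF k_iota k_pi hP])
  thus ?case by (simp add: nu_hom)
next
  case (Suc k)
  let ?G = "\<lambda>X m'. hb * bvlap deg W (nu I2 (kappa_hat deg Kk X)) m'"
  let ?Q = "(eta deg W Kk I2 ^^ k) P"
  let ?c = "hb ^ k / (\<Prod>l\<le>k. of_nat (n - 2 * l))"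
  have G: "?G ((?G ^^ k) P) = (\<lambda>m. (hb * ?c) * (eta deg W Kk I2 ?Q m + (-1) * kappa_hat deg Kk (bvlap deg W ?Q) m))"
  proof (rule ext)
    fix m'
    have "?G ((?G ^^ k) P) m' = hb * bvlap deg W (\<lambda>m. ?c * kappa_hat deg Kk ?Q m) m'"
      by (simp only: Suc.IH)
    also have "\<dots> = hb * (?c * bvlap deg W (kappa_hat deg Kk ?Q) m')"
      by (simp only: linop_mult[OF linop_bvlap])
    also have "\<dots> = (hb * ?c) * (eta deg W Kk I2 ?Q m' + (-1) * kappa_hat deg Kk (bvlap deg W ?Q) m')"
      by (simp add: bvlap_kappa[OF winv1 winv2 winv3 kdeg k_iota k_pi])
    finally show "?G ((?G ^^ k) P) m' = \<dots>" .
  qed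
  have K: "kappa_hat deg Kk (?G ((?G ^^ k) P)) = (\<lambda>m. (hb * ?c) * kappa_hat deg Kk (eta deg W Kk I2 ?Q) m)"
    unfolding G linop_mult[OF linop_kappa] linop_add[OF linop_kappa]
    by (simp add: kappa_sq[OF ksq kdeg])
  have hQ: "homN I2 (n - 2 * Suc k) (kappa_hat deg Kk (eta deg W Kk I2 ?Q))"
  proof -
    have "homN I2 (n - 2 * k - 2) (eta deg W Kk I2 ?Q)" by (rule homN_eta[OF homN_etapow[OF hP]])
    hence "homN I2 (n - 2 * k - 2) (kappa_hat deg Kk (eta deg W Kk I2 ?Q))" by (rule homN_kappa[OF k_iota k_pi])
    moreover have "n - 2 * k - 2 = n - 2 * Suc k" by simp
    ultimately show ?thesis by simp
  qed
  have "nu I2 (kappa_hat deg Kk ((?G ^^ Suc k) P)) = nu I2 (\<lambda>m. (hb * ?c) * kappa_hat deg Kk (eta deg W Kk I2 ?Q) m)"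
    using K by simp
  also have "\<dots> = (\<lambda>m. (hb * ?c) * kappa_hat deg Kk (eta deg W Kk I2 ?Q) m / of_nat (n - 2 * Suc k))"
    by (rule nu_hom[OF homN_scale[OF hQ]])
  also have "\<dots> = (\<lambda>m. hb ^ Suc k / (\<Prod>l\<le>Suc k. of_nat (n - 2 * l)) * kappa_hat deg Kk ((eta deg W Kk I2 ^^ Suc k) P) m)"
    by (simp add: prod.atMost_Suc divide_divide_eq_left mult_ac)
  finally show ?case .
qed

lemma Hpow:
  assumes hP: "homN I2 n P"
  shows "((\<lambda>X m'. hb * eta deg W Kk I2 (nu I2 X) m') ^^ k) P
       = (\<lambda>m. hb ^ k / (\<Prod>l<k. of_nat (n - 2 * l)) * (eta deg W Kk I2 ^^ k) P m)"
proof (induction k)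
  case 0 thus ?case by simp
next
  case (Suc k)
  let ?H = "\<lambda>X m'. hb * eta deg W Kk I2 (nu I2 X) m'"
  let ?Q = "(eta deg W Kk I2 ^^ k) P"
  let ?e = "hb ^ k / (\<Prod>l<k. of_nat (n - 2 * l))"
  let ?d = "of_nat (n - 2 * k) :: complex"
  have "nu I2 ((?H ^^ k) P) = (\<lambda>m. ?e * ?Q m / ?d)"
    unfolding Suc.IH by (rule nu_hom[OF homN_scale[OF homN_etapow[OF hP]]])
  also have "\<dots> = (\<lambda>m. (?e / ?d) * ?Q m)" by simp
  finally have nuH: "nu I2 ((?H ^^ k) P) = (\<lambda>m. (?e / ?d) * ?Q m)" .
  have "(?H ^^ Suc k) P = (\<lambda>m'. hb * eta deg W Kk I2 (\<lambda>m. (?e / ?d) * ?Q m) m')"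
    using nuH by simp
  also have "\<dots> = (\<lambda>m'. hb * ((?e / ?d) * eta deg W Kk I2 ?Q m'))"
    by (simp only: linop_mult[OF linop_eta])
  also have "\<dots> = (\<lambda>m. hb ^ Suc k / (\<Prod>l<Suc k. of_nat (n - 2 * l)) * (eta deg W Kk I2 ^^ Suc k) P m)"
    by (simp add: prod.lessThan_Suc divide_divide_eq_left mult_ac)
  finally show ?case .
qed

lemma RHS_term:
  fixes deg :: "'i::{finite,linorder} \<Rightarrow> int" and W Kk :: "real^('i::{finite,linorder})^('i::{finite,linorder})"
  assumes hP: "homN I2 n P"
  shows "kappa_hat deg Kk (nu I2 (((\<lambda>X m'. hb * eta deg W Kk I2 (nu I2 X) m') ^^ k) P))
       = (\<lambda>m. hb ^ k / (\<Prod>l\<le>k. of_nat (n - 2 * l)) * kappa_hat deg Kk ((eta deg W Kk I2 ^^ k) P) m)"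
proof -
  let ?Q = "(eta deg W Kk I2 ^^ k) P"
  let ?e = "hb ^ k / (\<Prod>l<k. of_nat (n - 2 * l))"
  let ?d = "of_nat (n - 2 * k) :: complex"
  have "nu I2 (((\<lambda>X m'. hb * eta deg W Kk I2 (nu I2 X) m') ^^ k) P) = (\<lambda>m. ?e * ?Q m / ?d)"
    unfolding Hpow[OF hP] by (rule nu_hom[OF homN_scale[OF homN_etapow[OF hP]]])
  also have "\<dots> = (\<lambda>m. (?e / ?d) * ?Q m)" by simp
  finally have "kappa_hat deg Kk (nu I2 (((\<lambda>X m'. hb * eta deg W Kk I2 (nu I2 X) m') ^^ k) P))
      = kappa_hat deg Kk (\<lambda>m. (?e / ?d) * ?Q m)" by simp
  also have "\<dots> = (\<lambda>m. (?e / ?d) * kappa_hat deg Kk ?Q m)" by (rule linop_mult[OF linop_kappa])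
  also have "\<dots> = (\<lambda>m. hb ^ k / (\<Prod>l\<le>k. of_nat (n - 2 * l)) * kappa_hat deg Kk ?Q m)"
    by (simp add: lessThan_Suc_atMost[symmetric] prod.lessThan_Suc divide_divide_eq_left)
  finally show ?thesis .
qed

theorem mainTheorem2:
  fixes deg :: "'i::{finite,linorder} \<Rightarrow> int"
    and D W Kk :: "real^('i::{finite,linorder})^('i::{finite,linorder})"
    and I2 :: "'i set"
    and hbar :: real
  assumes d_deg: "\<forall>i j. D $ i $ j \<noteq> 0 \<longrightarrow> deg i = deg j + 1"
    and d_sq: "D ** D = 0"
    and w_deg: "\<forall>i j. W $ i $ j \<noteq> 0 \<longrightarrow> deg i + deg j = 1"
    and w_sym: "transpose W = W"
    and w_nondeg: "invertible W"
    and w_d: "\<exists>\<sigma>::int \<Rightarrow> int \<Rightarrow> real. (\<forall>a b. \<sigma> a b = 1 \<or> \<sigma> a b = -1) \<and>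
              (\<forall>i j. omega W (D *v ebasis i) (ebasis j)
                     = \<sigma> (deg i) (deg j) * omega W (ebasis i) (D *v ebasis j))"
    and split_d: "\<forall>i j. D $ i $ j \<noteq> 0 \<longrightarrow> (i \<in> I2 \<longleftrightarrow> j \<in> I2)"
    and split_w: "\<forall>i j. W $ i $ j \<noteq> 0 \<longrightarrow> (i \<in> I2 \<longleftrightarrow> j \<in> I2)"
    and acyclic: "\<forall>v. (\<forall>i. i \<notin> I2 \<longrightarrow> v $ i = 0) \<longrightarrow> D *v v = 0 \<longrightarrow>
                   (\<exists>u. (\<forall>i. i \<notin> I2 \<longrightarrow> u $ i = 0) \<and> v = D *v u)"
    and k_deg: "\<forall>i j. Kk $ i $ j \<noteq> 0 \<longrightarrow> deg i + 1 = deg j"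
    and k_htpy: "D ** Kk + Kk ** D = mat 1 - (\<chi> i j. if i = j \<and> i \<notin> I2 then 1 else 0)"
    and k_sq: "Kk ** Kk = 0"
    and k_iota: "\<forall>i j. j \<notin> I2 \<longrightarrow> Kk $ i $ j = 0"
    and k_pi: "\<forall>i j. i \<notin> I2 \<longrightarrow> Kk $ i $ j = 0"
    and k_w: "\<exists>\<sigma>::int \<Rightarrow> int \<Rightarrow> real. (\<forall>a b. \<sigma> a b = 1 \<or> \<sigma> a b = -1) \<and>
              (\<forall>i j. omega W (ebasis i) (Kk *v ebasis j)
                     = \<sigma> (deg i) (deg j) * omega W (Kk *v ebasis i) (ebasis j))"
  shows "(\<forall>P n. spoly deg P \<and> homN I2 n P \<and> 1 \<le> n \<longrightarrow>
            K_hbar deg W Kk I2 hbar P =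
              (\<lambda>m. \<Sum>j\<le>(n - 1) div 2.
                 (\<i> * of_real hbar) ^ j / (\<Prod>l\<le>j. of_nat (n - 2 * l))
                 * kappa_hat deg Kk (((eta deg W Kk I2) ^^ j) P) m))
       \<and> (\<forall>P. spoly deg P \<and> homN I2 0 P \<longrightarrow> K_hbar deg W Kk I2 hbar P = (\<lambda>m. 0))
       \<and> (\<forall>P. spoly deg P \<longrightarrow>
            K_hbar deg W Kk I2 hbar P =
              (\<lambda>m. \<Sum>j. kappa_hat deg Kk (nu I2
                 (((\<lambda>X m'. (\<i> * of_real hbar) * eta deg W Kk I2 (nu I2 X) m') ^^ j) P)) m))"
proof -
  note wf = winv_facts[OF w_deg w_sym w_nondeg split_w]
  define G where "G = (\<lambda>X m'. (\<i> * complex_of_real hbar) * bvlap deg W (nu I2 (kappa_hat deg Kk X)) m')"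
  define H where "H = (\<lambda>X m'. (\<i> * complex_of_real hbar) * eta deg W Kk I2 (nu I2 X) m')"
  define c where "c n k = (\<i> * complex_of_real hbar) ^ k / (\<Prod>l\<le>k. of_nat (n - 2 * l))" for n k :: nat
  have KH: "K_hbar deg W Kk I2 hbar P = (\<lambda>m. \<Sum>k. nu I2 (kappa_hat deg Kk ((G ^^ k) P)) m)" for P
  proof -
    have "(\<lambda>X m'. - (- (\<i> * complex_of_real hbar) * bvlap deg W (nu I2 (kappa_hat deg Kk X)) m')) = G"
      unfolding G_def by (simp add: fun_eq_iff)
    thus ?thesis unfolding K_hbar_def pert_homotopy_def by simp
  qed
  have LT: "nu I2 (kappa_hat deg Kk ((G ^^ k) P)) = (\<lambda>m. c n k * kappa_hat deg Kk ((eta deg W Kk I2 ^^ k) P) m)"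
    if "homN I2 n P" for P n k
    unfolding G_def c_def by (rule LHS_term[OF wf(1) wf(2) wf(3) k_deg k_iota k_pi k_sq that])
  have RT: "kappa_hat deg Kk (nu I2 ((H ^^ k) P)) = (\<lambda>m. c n k * kappa_hat deg Kk ((eta deg W Kk I2 ^^ k) P) m)"
    if "homN I2 n P" for P n k
    unfolding H_def c_def by (rule RHS_term[OF that])
  have c0: "c n k = 0" if "n \<le> 2 * k" for n k
  proof -
    have "(\<Prod>l\<le>k. of_nat (n - 2 * l) :: complex) = 0"
      by (rule prod_zero) (use that in auto)
    thus ?thesis unfolding c_def by simp
  qed
  have C1: "K_hbar deg W Kk I2 hbar P =
              (\<lambda>m. \<Sum>j\<le>(n - 1) div 2.
                 (\<i> * of_real hbar) ^ j / (\<Prod>l\<le>j. of_nat (n - 2 * l))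
                 * kappa_hat deg Kk (((eta deg W Kk I2) ^^ j) P) m)"
    if "homN I2 n P" "1 \<le> n" for P n
  proof (rule ext)
    fix m
    have "K_hbar deg W Kk I2 hbar P m = (\<Sum>k. c n k * kappa_hat deg Kk ((eta deg W Kk I2 ^^ k) P) m)"
      unfolding KH LT[OF that(1)] by simp
    also have "\<dots> = (\<Sum>k\<le>(n - 1) div 2. c n k * kappa_hat deg Kk ((eta deg W Kk I2 ^^ k) P) m)"
    proof (rule suminf_finite)
      fix k assume "k \<notin> {..(n - 1) div 2}"
      hence "n \<le> 2 * k" by auto
      thus "c n k * kappa_hat deg Kk ((eta deg W Kk I2 ^^ k) P) m = 0" using c0 by simp
    qed simp
    finally show "K_hbar deg W Kk I2 hbar P m = (\<Sum>j\<le>(n - 1) div 2.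
                 (\<i> * of_real hbar) ^ j / (\<Prod>l\<le>j. of_nat (n - 2 * l))
                 * kappa_hat deg Kk (((eta deg W Kk I2) ^^ j) P) m)" unfolding c_def .
  qed
  have C2: "K_hbar deg W Kk I2 hbar P = (\<lambda>m. 0)" if "homN I2 0 P" for P
    unfolding KH LT[OF that] using c0[of 0] by simp
  have C3: "K_hbar deg W Kk I2 hbar P =
              (\<lambda>m. \<Sum>j. kappa_hat deg Kk (nu I2
                 (((\<lambda>X m'. (\<i> * of_real hbar) * eta deg W Kk I2 (nu I2 X) m') ^^ j) P)) m)"
    if sp: "spoly deg P" for P
  proof -
    define S where "S = Ndeg I2 ` {m. P m \<noteq> 0}"
    have finS: "finite S" using sp unfolding spoly_def S_def by simp
    define pr where "pr d = (\<lambda>m. if Ndeg I2 m = d then P m else 0)" for d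
    have hpr: "homN I2 d (pr d)" for d unfolding homN_def pr_def by auto
    have Pdec: "P = (\<lambda>m. \<Sum>d\<in>S. pr d m)"
    proof (rule ext)
      fix m
      show "P m = (\<Sum>d\<in>S. pr d m)"
      proof (cases "P m = 0")
        case True
        have "(\<Sum>d\<in>S. pr d m) = 0" unfolding pr_def using True by (intro sum.neutral) auto
        thus ?thesis using True by simp
      next
        case False
        hence "Ndeg I2 m \<in> S" unfolding S_def by auto
        thus ?thesis unfolding pr_def using finS by (simp add: sum.delta)
      qed
    qed
    have linG: "linop G" unfolding G_def
      by (rule linop_cmul[OF linop_comp[OF linop_bvlap linop_comp[OF linop_nu linop_kappa]]])
    have linH: "linop H" unfolding H_def
      by (rule linop_cmul[OF linop_comp[OF linop_eta linop_nu]])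
    have linT: "linop (\<lambda>X. nu I2 (kappa_hat deg Kk ((G ^^ k) X)))" for k
      by (rule linop_comp[OF linop_nu linop_comp[OF linop_kappa linop_funpow[OF linG]]])
    have linR: "linop (\<lambda>X. kappa_hat deg Kk (nu I2 ((H ^^ k) X)))" for k
      by (rule linop_comp[OF linop_kappa linop_comp[OF linop_nu linop_funpow[OF linH]]])
    have TR: "nu I2 (kappa_hat deg Kk ((G ^^ k) P)) = kappa_hat deg Kk (nu I2 ((H ^^ k) P))" for k
    proof -
      have "nu I2 (kappa_hat deg Kk ((G ^^ k) P)) = (\<lambda>m. \<Sum>d\<in>S. nu I2 (kappa_hat deg Kk ((G ^^ k) (pr d))) m)"
        by (subst Pdec) (rule linop_sum[OF linT finS])
      also have "\<dots> = (\<lambda>m. \<Sum>d\<in>S. kappa_hat deg Kk (nu I2 ((H ^^ k) (pr d))) m)"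
        by (simp only: LT[OF hpr] RT[OF hpr])
      also have "\<dots> = kappa_hat deg Kk (nu I2 ((H ^^ k) P))"
        by (subst Pdec) (rule linop_sum[OF linR finS, symmetric])
      finally show ?thesis .
    qed
    show ?thesis unfolding KH TR H_def ..
  qed
  show ?thesis
    apply (intro conjI allI impI)
      apply (rule C1; simp)
     apply (rule C2; simp)
    apply (rule C3; simp)
    done
qed


end
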